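(* Fix a prompt $q$ and a policy $\pi_k$, and assume $1-\rho^+(q)-\rho^-(q)\neq 0$. Let $n\ge2$ and let $(o_i,\xi_i)_{i=1}^n$ be i.i.d. with $o_i\sim\pi_k(\cdot\mid q)$ and $\xi_i\sim U[0,1]$ independent of $o_i$. Let $\hat r_i=\hat r(q,o_i,\xi_i)$, $\bar r(q)=\frac1n\sum_{i=1}^n\hat r_i$, $\widehat{\mathrm{Var}}=\frac1{n-1}\sum_{i=1}^n(\hat r_i-\bar r(q))^2$, and \[ Z=\widehat{\mathrm{Var}}-\frac{\bar r(q)\,\rho^-(q)(1-\rho^-(q))}{(1-\rho^+(q)-\rho^-(q))^2}-\frac{(1-\bar r(q))\,\rho^+(q)(1-\rho^+(q))}{(1-\rho^+(q)-\rho^-(q))^2}. \] Then $\mathbb E[Z]=p_{\pi_k}(q)(1-p_{\pi_k}(q))=\mathrm{Var}_{o\sim\pi_k(\cdot\mid q)}(r^*(q,o))$, and $Z\to p_{\pi_k}(q)(1-p_{\pi_k}(q))$ almost surely as $n\to\infty$ (i.e. $Z$ is an unbiased and consistent estimator of the true reward variance).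
   Context: Setting: $\mathcal O$ is a countable set of responses; $r^*:\mathcal Q\times\mathcal O\to\{0,1\}$ is the true binary reward; $p_\pi(q)=\mathbb E_{o\sim\pi(\cdot\mid q)}[r^*(q,o)]$. Noise model: flip rates $\rho^+(q),\rho^-(q)\in[0,1]$; for $\xi\in[0,1]$ the observed reward is $\tilde r(q,o,\xi)=(1-r^*(q,o))\mathbf 1_{\{\xi\le\rho^+(q)\}}+r^*(q,o)\mathbf 1_{\{\xi\le 1-\rho^-(q)\}}$. The corrected reward is $\hat r(q,o,\xi)=\dfrac{\tilde r(q,o,\xi)-\rho^+(q)}{1-\rho^+(q)-\rho^-(q)}$. *)

theory Defs
  imports "HOL-Probability.Probability"
begin

text \<open>Noisy observed reward: rs is the true binary reward r*, rp = rho^+, rm = rho^-.\<close>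
definition noisy_reward ::
  "('q \<Rightarrow> 'o \<Rightarrow> real) \<Rightarrow> ('q \<Rightarrow> real) \<Rightarrow> ('q \<Rightarrow> real) \<Rightarrow> 'q \<Rightarrow> 'o \<Rightarrow> real \<Rightarrow> real" where
  "noisy_reward rs rp rm q x \<xi> =
     (1 - rs q x) * (if \<xi> \<le> rp q then 1 else 0) + rs q x * (if \<xi> \<le> 1 - rm q then 1 else 0)"

definition corrected_reward ::
  "('q \<Rightarrow> 'o \<Rightarrow> real) \<Rightarrow> ('q \<Rightarrow> real) \<Rightarrow> ('q \<Rightarrow> real) \<Rightarrow> 'q \<Rightarrow> 'o \<Rightarrow> real \<Rightarrow> real" where
  "corrected_reward rs rp rm q x \<xi> =
     (noisy_reward rs rp rm q x \<xi> - rp q) / (1 - rp q - rm q)"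

definition p_pol :: "('q \<Rightarrow> 'o \<Rightarrow> real) \<Rightarrow> ('q \<Rightarrow> 'o pmf) \<Rightarrow> 'q \<Rightarrow> real" where
  "p_pol rs \<pi> q = measure_pmf.expectation (\<pi> q) (\<lambda>x. rs q x)"

text \<open>The estimator Z computed from the first n samples (indices 0..n-1) of the
  sequences os (responses) and xs (uniform variables).\<close>
definition Z_est ::
  "('q \<Rightarrow> 'o \<Rightarrow> real) \<Rightarrow> ('q \<Rightarrow> real) \<Rightarrow> ('q \<Rightarrow> real) \<Rightarrow> 'q \<Rightarrow> nat \<Rightarrow> (nat \<Rightarrow> 'o) \<Rightarrow> (nat \<Rightarrow> real) \<Rightarrow> real" where
  "Z_est rs rp rm q n os xs =
     (let rh = (\<lambda>i. corrected_reward rs rp rm q (os i) (xs i));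
          rbar = (\<Sum>i<n. rh i) / real n;
          vhat = (\<Sum>i<n. (rh i - rbar)^2) / (real n - 1);
          d = (1 - rp q - rm q)^2
      in vhat - rbar * rm q * (1 - rm q) / d - (1 - rbar) * rp q * (1 - rp q) / d)"

end

theory Submission
  imports Defs "HOL-Real_Asymp.Real_Asymp"
begin

lemma slln_bounded:
  fixes X :: "nat \<Rightarrow> 'a \<Rightarrow> real"
  assumes P: "prob_space M"
    and ind: "prob_space.indep_vars M (\<lambda>_. borel) X UNIV"
    and dist: "\<And>i. distr M borel (X i) = distr M borel (X 0)"
    and bnd: "\<And>i \<omega>. \<omega> \<in> space M \<Longrightarrow> \<bar>X i \<omega>\<bar> \<le> c"
    and c: "c > 0"
  shows "AE \<omega> in M. (\<lambda>n. (\<Sum>i<n. X i \<omega>) / real n) \<longlonglongrightarrow> prob_space.expectation M (X 0)"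
proof -
  interpret prob_space M by (rule P)
  define \<mu> where "\<mu> = expectation (X 0)"
  have rv[measurable]: "X i \<in> borel_measurable M" for i
    using ind unfolding indep_vars_def by auto
  have ev: "AE \<omega> in M. eventually (\<lambda>n. \<bar>(\<Sum>i<n. X i \<omega>) / real n - \<mu>\<bar> < e) sequentially"
    if e: "e > 0" for e
  proof -
    define A where "A n = {\<omega>\<in>space M. \<bar>(\<Sum>i<n. X i \<omega>) / real n - \<mu>\<bar> \<ge> e}" for n
    have Am[measurable]: "A n \<in> sets M" for n unfolding A_def by measurable
    have bound: "prob (A n) \<le> 2 * exp (-2 * e\<^sup>2 / (2*c)\<^sup>2) ^ n" if n: "n \<ge> 1" for n
    proof -
      interpret H: Hoeffding_ineq_iid M "{..<n}" X "X 0" "-c" c \<mu>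
      proof unfold_locales
        show "indep_vars (\<lambda>_. borel) X {..<n}"
          using indep_vars_subset[OF ind] by auto
        show "AE x in M. X 0 x \<in> {- c..c}"
          proof (intro AE_I2)
          fix x assume "x \<in> space M"
          then have "\<bar>X 0 x\<bar> \<le> c" by (rule bnd)
          then show "X 0 x \<in> {- c..c}" by (simp add: abs_le_iff)
        qed
      qed (auto intro: dist simp: \<mu>_def)
      have ne: "{..<n} \<noteq> {}" using n by (auto simp: lessThan_empty_iff)
      have "prob (A n) \<le> 2 * exp (-2 * real (card {..<n}) * e\<^sup>2 / (c - - c)\<^sup>2)"
        using H.Hoeffding_ineq_abs_ge'[of e, OF _ _ ne] e c unfolding A_def card_lessThan by simp
      also have "-2 * real (card {..<n}) * e\<^sup>2 / (c - - c)\<^sup>2 = real n * (-2 * e\<^sup>2 / (2*c)\<^sup>2)"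
        by simp
      also have "exp \<dots> = exp (-2 * e\<^sup>2 / (2*c)\<^sup>2) ^ n"
        by (simp only: exp_of_nat_mult)
      finally show ?thesis .
    qed
    have sg: "summable (\<lambda>n. 2 * exp (-2 * e\<^sup>2 / (2*c)\<^sup>2) ^ n)"
    proof (intro summable_mult summable_geometric)
      have "-2 * e\<^sup>2 / (2*c)\<^sup>2 < 0" using e c by (auto intro!: divide_neg_pos)
      then show "norm (exp (-2 * e\<^sup>2 / (2*c)\<^sup>2)) < 1" by simp
    qed
    have "summable (\<lambda>n. measure M (A n))"
      proof (rule summable_comparison_test'[OF sg, of 1])
      fix n :: nat assume "1 \<le> n"
      then show "norm (measure M (A n)) \<le> 2 * exp (-2 * e\<^sup>2 / (2*c)\<^sup>2) ^ n"
        using bound[of n] by simp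
    qed
    then have "AE x in M. eventually (\<lambda>n. x \<in> space M - A n) sequentially"
      by (intro borel_cantelli_AE1) (auto simp: less_top[symmetric])
    then show ?thesis
      by (rule AE_mp) (auto intro!: AE_I2 elim!: eventually_mono simp: A_def not_le)
  qed
  have "AE \<omega> in M. \<forall>k::nat. eventually (\<lambda>n. \<bar>(\<Sum>i<n. X i \<omega>) / real n - \<mu>\<bar> < inverse (real (Suc k))) sequentially"
    unfolding AE_all_countable by (intro allI ev) auto
  then show ?thesis
  proof (rule AE_mp, intro AE_I2 impI)
    fix \<omega> assume H: "\<forall>k::nat. eventually (\<lambda>n. \<bar>(\<Sum>i<n. X i \<omega>) / real n - \<mu>\<bar> < inverse (real (Suc k))) sequentially"
    show "(\<lambda>n. (\<Sum>i<n. X i \<omega>) / real n) \<longlonglongrightarrow> expectation (X 0)"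
      unfolding \<mu>_def[symmetric]
    proof (rule tendstoI)
      fix e :: real assume "e > 0"
      then obtain k where k: "inverse (real (Suc k)) < e" using reals_Archimedean by blast
      show "eventually (\<lambda>n. dist ((\<Sum>i<n. X i \<omega>) / real n) \<mu> < e) sequentially"
        using H[rule_format, of k] by eventually_elim (use k in \<open>auto simp: dist_real_def\<close>)
    qed
  qed
qed
lemma unif01_prob: "prob_space (uniform_measure lborel {0..1::real})"
  by (intro prob_space_uniform_measure) auto

lemma unif01_ind:
  assumes c: "c \<in> {0..1::real}"
  shows "(\<integral>\<xi>. a + b * (if \<xi> \<le> c then 1 else 0) \<partial>uniform_measure lborel {0..1::real}) = a + b * c"
proof -
  interpret U: prob_space "uniform_measure lborel {0..1::real}" by (rule unif01_prob)
  have ind: "(\<lambda>\<xi>::real. if \<xi> \<le> c then 1 else 0) = indicator {..c}"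
    by (auto simp: indicator_def)
  have "(\<integral>\<xi>. (if \<xi> \<le> c then 1 else 0::real) \<partial>uniform_measure lborel {0..1::real}) = 
        measure (uniform_measure lborel {0..1::real}) {..c}"
    unfolding ind by simp
  also have "\<dots> = measure lborel ({0..1} \<inter> {..c}) / measure lborel {0..1::real}"
    by (subst measure_uniform_measure) auto
  also have "{0..1} \<inter> {..c} = {0..c}" using c by auto
  also have "measure lborel {0..c} / measure lborel {0..1::real} = c" using c by simp
  finally have I: "(\<integral>\<xi>. (if \<xi> \<le> c then 1 else 0::real) \<partial>uniform_measure lborel {0..1::real}) = c" .
  have int: "integrable (uniform_measure lborel {0..1::real}) (\<lambda>\<xi>. if \<xi> \<le> c then 1 else 0::real)"
    by (intro U.integrable_const_bound[where B=1]) auto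
  show ?thesis
    using int I by (simp add: integral_add)
qed

lemma corrected_bound:
  assumes binary: "\<And>q' x. rs q' x \<in> {0, 1}"
    and rp_range: "\<And>q'. rp q' \<in> {0..1}"
    and rm_range: "\<And>q'. rm q' \<in> {0..1}"
  shows "\<bar>corrected_reward rs rp rm q x \<xi>\<bar> \<le> 1 / \<bar>1 - rp q - rm q\<bar>"
proof -
  have "\<bar>noisy_reward rs rp rm q x \<xi> - rp q\<bar> \<le> 1"
    using binary[of q x] rp_range[of q] rm_range[of q]
    unfolding noisy_reward_def by auto
  then show ?thesis
    unfolding corrected_reward_def abs_divide
    by (simp add: divide_right_mono)
qed

lemma corrected_inner:
  assumes binary: "\<And>q' x. rs q' x \<in> {0, 1}"
    and rp_range: "\<And>q'. rp q' \<in> {0..1}"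
    and rm_range: "\<And>q'. rm q' \<in> {0..1}"
    and denom: "1 - rp q - rm q \<noteq> 0"
  shows "(\<integral>\<xi>. corrected_reward rs rp rm q x \<xi> \<partial>uniform_measure lborel {0..1::real}) = rs q x"
    and "(\<integral>\<xi>. (corrected_reward rs rp rm q x \<xi>)\<^sup>2 \<partial>uniform_measure lborel {0..1::real}) =
           rp q * (1 - rp q) / (1 - rp q - rm q)\<^sup>2 + rs q x *
             (rm q * (1 - rm q) / (1 - rp q - rm q)\<^sup>2 + 1 - rp q * (1 - rp q) / (1 - rp q - rm q)\<^sup>2)"
proof -
  define d where "d = 1 - rp q - rm q"
  have d: "d \<noteq> 0" using denom by (simp add: d_def)
  have rp: "rp q \<in> {0..1}" and rm1: "1 - rm q \<in> {0..1}" using rp_range[of q] rm_range[of q] by auto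
  have "(\<integral>\<xi>. corrected_reward rs rp rm q x \<xi> \<partial>uniform_measure lborel {0..1::real}) = rs q x
     \<and> (\<integral>\<xi>. (corrected_reward rs rp rm q x \<xi>)\<^sup>2 \<partial>uniform_measure lborel {0..1::real}) =
           rp q * (1 - rp q) / d\<^sup>2 + rs q x * (rm q * (1 - rm q) / d\<^sup>2 + 1 - rp q * (1 - rp q) / d\<^sup>2)"
  proof (cases "rs q x = 0")
    case True
    have e1: "corrected_reward rs rp rm q x \<xi> = - rp q / d + (1/d) * (if \<xi> \<le> rp q then 1 else 0)" for \<xi>
      unfolding corrected_reward_def noisy_reward_def d_def[symmetric] using True d
      by (simp add: field_simps)
    have e2: "(corrected_reward rs rp rm q x \<xi>)\<^sup>2 = rp q ^ 2 / d^2 + ((1 - 2 * rp q)/d^2) * (if \<xi> \<le> rp q then 1 else 0)" for \<xi>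
      unfolding corrected_reward_def noisy_reward_def d_def[symmetric] using True d
      by (simp add: field_simps power2_eq_square)
    have i1: "(\<integral>\<xi>. corrected_reward rs rp rm q x \<xi> \<partial>uniform_measure lborel {0..1::real}) = - rp q / d + (1/d) * rp q"
      by (simp only: e1 unif01_ind[OF rp])
    have i2: "(\<integral>\<xi>. (corrected_reward rs rp rm q x \<xi>)\<^sup>2 \<partial>uniform_measure lborel {0..1::real}) = rp q ^ 2 / d^2 + ((1 - 2 * rp q)/d^2) * rp q"
      by (simp only: e2 unif01_ind[OF rp])
    show ?thesis
      unfolding i1 i2 using True d by (simp add: field_simps power2_eq_square)
  next
    case False
    then have T: "rs q x = 1" using binary[of q x] by auto
    have e1: "corrected_reward rs rp rm q x \<xi> = - rp q / d + (1/d) * (if \<xi> \<le> 1 - rm q then 1 else 0)" for \<xi>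
      unfolding corrected_reward_def noisy_reward_def d_def[symmetric] using T d
      by (simp add: field_simps)
    have e2: "(corrected_reward rs rp rm q x \<xi>)\<^sup>2 = rp q ^ 2 / d^2 + ((1 - 2 * rp q)/d^2) * (if \<xi> \<le> 1 - rm q then 1 else 0)" for \<xi>
      unfolding corrected_reward_def noisy_reward_def d_def[symmetric] using T d
      by (simp add: field_simps power2_eq_square)
    have i1: "(\<integral>\<xi>. corrected_reward rs rp rm q x \<xi> \<partial>uniform_measure lborel {0..1::real}) = - rp q / d + (1/d) * (1 - rm q)"
      by (simp only: e1 unif01_ind[OF rm1])
    have i2: "(\<integral>\<xi>. (corrected_reward rs rp rm q x \<xi>)\<^sup>2 \<partial>uniform_measure lborel {0..1::real}) = rp q ^ 2 / d^2 + ((1 - 2 * rp q)/d^2) * (1 - rm q)"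
      by (simp only: e2 unif01_ind[OF rm1])
    have "- rp q / d + (1/d) * (1 - rm q) = (1 - rp q - rm q) / d" using d by (simp add: field_simps)
    then have k1: "- rp q / d + (1/d) * (1 - rm q) = 1" using d by (simp add: d_def[symmetric])
    have k0: "rp q ^ 2 + (1 - 2 * rp q) * (1 - rm q) = rm q * (1 - rm q) + d^2"
      by (simp add: d_def algebra_simps power2_eq_square)
    have k2: "rp q ^ 2 / d^2 + ((1 - 2 * rp q)/d^2) * (1 - rm q) = 
       rp q * (1 - rp q) / d\<^sup>2 + rs q x * (rm q * (1 - rm q) / d\<^sup>2 + 1 - rp q * (1 - rp q) / d\<^sup>2)"
    proof -
      have "rp q ^ 2 / d^2 + ((1 - 2 * rp q)/d^2) * (1 - rm q) = (rp q ^ 2 + (1 - 2 * rp q) * (1 - rm q)) / d^2"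
        by (simp add: add_divide_distrib)
      also have "\<dots> = (rm q * (1 - rm q) + d^2) / d^2" by (simp only: k0)
      also have "\<dots> = rm q * (1 - rm q) / d^2 + 1" using d by (simp add: add_divide_distrib)
      finally show ?thesis using T by simp
    qed
    show ?thesis
      unfolding i1 i2 k1 k2 using T by simp
  qed
  then show "(\<integral>\<xi>. corrected_reward rs rp rm q x \<xi> \<partial>uniform_measure lborel {0..1::real}) = rs q x"
    and "(\<integral>\<xi>. (corrected_reward rs rp rm q x \<xi>)\<^sup>2 \<partial>uniform_measure lborel {0..1::real}) =
           rp q * (1 - rp q) / (1 - rp q - rm q)\<^sup>2 + rs q x *
             (rm q * (1 - rm q) / (1 - rp q - rm q)\<^sup>2 + 1 - rp q * (1 - rp q) / (1 - rp q - rm q)\<^sup>2)"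
    by (simp_all add: d_def)
qed
lemma corrected_meas:
  "(\<lambda>z. corrected_reward rs rp rm q (fst z) (snd z)) \<in> borel_measurable (count_space (UNIV::'o::countable set) \<Otimes>\<^sub>M borel)"
  unfolding corrected_reward_def noisy_reward_def by measurable

lemma sets_P: "sets (measure_pmf (p::'o::countable pmf) \<Otimes>\<^sub>M uniform_measure lborel {0..1::real}) = sets (count_space UNIV \<Otimes>\<^sub>M borel)"
  by (intro sets_pair_measure_cong sets_measure_pmf_count_space) simp

lemma corrected_outer:
  fixes rs :: "'q \<Rightarrow> 'o::countable \<Rightarrow> real" and \<pi> :: "'q \<Rightarrow> 'o pmf"
  assumes binary: "\<And>q' x. rs q' x \<in> {0, 1}"
    and rp_range: "\<And>q'. rp q' \<in> {0..1}"
    and rm_range: "\<And>q'. rm q' \<in> {0..1}"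
    and denom: "1 - rp q - rm q \<noteq> 0"
  shows "integrable (measure_pmf (\<pi> q) \<Otimes>\<^sub>M uniform_measure lborel {0..1::real}) (\<lambda>z. corrected_reward rs rp rm q (fst z) (snd z))"
    and "integrable (measure_pmf (\<pi> q) \<Otimes>\<^sub>M uniform_measure lborel {0..1::real}) (\<lambda>z. (corrected_reward rs rp rm q (fst z) (snd z))\<^sup>2)"
    and "(\<integral>z. corrected_reward rs rp rm q (fst z) (snd z) \<partial>(measure_pmf (\<pi> q) \<Otimes>\<^sub>M uniform_measure lborel {0..1::real})) = p_pol rs \<pi> q"
    and "(\<integral>z. (corrected_reward rs rp rm q (fst z) (snd z))\<^sup>2 \<partial>(measure_pmf (\<pi> q) \<Otimes>\<^sub>M uniform_measure lborel {0..1::real})) =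
           rp q * (1 - rp q) / (1 - rp q - rm q)\<^sup>2 + p_pol rs \<pi> q *
             (rm q * (1 - rm q) / (1 - rp q - rm q)\<^sup>2 + 1 - rp q * (1 - rp q) / (1 - rp q - rm q)\<^sup>2)"
proof -
  define U where "U = uniform_measure lborel {0..1::real}"
  interpret U: prob_space U unfolding U_def by (rule unif01_prob)
  interpret PP: pair_prob_space "measure_pmf (\<pi> q)" U by unfold_locales
  define g where "g z = corrected_reward rs rp rm q (fst z) (snd z)" for z
  define K where "K = 1 / \<bar>1 - rp q - rm q\<bar>"
  have gm: "g \<in> borel_measurable (measure_pmf (\<pi> q) \<Otimes>\<^sub>M U)"
    using corrected_meas[of rs rp rm q] unfolding g_def U_def
    by (subst measurable_cong_sets[OF sets_P refl])
  have gb: "\<bar>g z\<bar> \<le> K" for z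
    unfolding g_def K_def by (rule corrected_bound[OF binary rp_range rm_range])
  show i1: "integrable (measure_pmf (\<pi> q) \<Otimes>\<^sub>M uniform_measure lborel {0..1::real}) (\<lambda>z. corrected_reward rs rp rm q (fst z) (snd z))"
    unfolding U_def[symmetric] g_def[symmetric]
    by (rule PP.P.integrable_const_bound[where B=K]) (use gm gb in auto)
  have gb2: "\<bar>(g z)\<^sup>2\<bar> \<le> K\<^sup>2" for z
    using power_mono[OF gb[of z] abs_ge_zero, of 2] by simp
  show i2: "integrable (measure_pmf (\<pi> q) \<Otimes>\<^sub>M uniform_measure lborel {0..1::real}) (\<lambda>z. (corrected_reward rs rp rm q (fst z) (snd z))\<^sup>2)"
    unfolding U_def[symmetric] g_def[symmetric]
    by (rule PP.P.integrable_const_bound[where B="K\<^sup>2"]) (use gm gb2 in auto)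
  have rsi: "integrable (measure_pmf (\<pi> q)) (rs q)"
    proof (rule measure_pmf.integrable_const_bound[where B=1])
    show "AE x in measure_pmf (\<pi> q). norm (rs q x) \<le> 1"
    proof (intro AE_I2)
      fix x have "rs q x \<in> {0, 1}" by (rule binary)
      then show "norm (rs q x) \<le> 1" by auto
    qed
  qed simp
  show "(\<integral>z. corrected_reward rs rp rm q (fst z) (snd z) \<partial>(measure_pmf (\<pi> q) \<Otimes>\<^sub>M uniform_measure lborel {0..1::real})) = p_pol rs \<pi> q"
    using PP.integral_fst'[OF i1[folded U_def]]
    by (simp add: U_def corrected_inner(1)[of rs rp rm q, OF binary rp_range rm_range denom] p_pol_def)
  show "(\<integral>z. (corrected_reward rs rp rm q (fst z) (snd z))\<^sup>2 \<partial>(measure_pmf (\<pi> q) \<Otimes>\<^sub>M uniform_measure lborel {0..1::real})) =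
           rp q * (1 - rp q) / (1 - rp q - rm q)\<^sup>2 + p_pol rs \<pi> q *
             (rm q * (1 - rm q) / (1 - rp q - rm q)\<^sup>2 + 1 - rp q * (1 - rp q) / (1 - rp q - rm q)\<^sup>2)"
    using PP.integral_fst'[OF i2[folded U_def]] rsi
    by (simp add: U_def corrected_inner(2)[of rs rp rm q, OF binary rp_range rm_range denom] p_pol_def)
qed
lemma alg1:
  fixes N S1 S2 a1 a2 b1 b2 D :: real
  assumes "N \<noteq> 0" "N - 1 \<noteq> 0"
  shows "(S2 - S1\<^sup>2 / N) / (N - 1) - S1 / N * a1 * a2 / D - (1 - S1 / N) * b1 * b2 / D
     = S2 / (N - 1) - S1\<^sup>2 / (N * (N - 1)) - S1 * (a1 * a2 / D - b1 * b2 / D) / N - b1 * b2 / D"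
proof -
  have "(S2 - S1\<^sup>2 / N) / (N - 1) = S2 / (N - 1) - S1\<^sup>2 / (N * (N - 1))"
    by (simp add: diff_divide_distrib divide_divide_eq_left)
  moreover have "S1 / N * a1 * a2 / D + (1 - S1 / N) * b1 * b2 / D = S1 * (a1 * a2 / D - b1 * b2 / D) / N + b1 * b2 / D"
    using assms by (cases "D = 0") (simp_all add: field_simps)
  ultimately show ?thesis by (simp add: algebra_simps)
qed

lemma Z_alg:
  assumes n: "n \<ge> 2"
  shows "Z_est rs rp rm q n os xs =
     (\<Sum>i<n. (corrected_reward rs rp rm q (os i) (xs i))\<^sup>2) / (real n - 1)
     - (\<Sum>i<n. corrected_reward rs rp rm q (os i) (xs i))\<^sup>2 / (real n * (real n - 1))
     - (\<Sum>i<n. corrected_reward rs rp rm q (os i) (xs i)) *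
        (rm q * (1 - rm q) / (1 - rp q - rm q)\<^sup>2 - rp q * (1 - rp q) / (1 - rp q - rm q)\<^sup>2) / real n
     - rp q * (1 - rp q) / (1 - rp q - rm q)\<^sup>2"
proof -
  define rh where "rh i = corrected_reward rs rp rm q (os i) (xs i)" for i
  define S1 where "S1 = (\<Sum>i<n. rh i)"
  define S2 where "S2 = (\<Sum>i<n. (rh i)\<^sup>2)"
  define d where "d = (1 - rp q - rm q)\<^sup>2"
  have n0: "real n \<noteq> 0" "real n - 1 \<noteq> 0" using n by auto
  have "(\<Sum>i<n. (rh i - S1 / real n)\<^sup>2) = (\<Sum>i<n. (rh i)\<^sup>2 - 2 * (S1 / real n) * rh i + (S1 / real n)\<^sup>2)"
    by (intro sum.cong) (auto simp: power2_diff algebra_simps)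
  also have "\<dots> = S2 - 2 * (S1 / real n) * S1 + real n * (S1 / real n)\<^sup>2"
    by (simp add: sum.distrib sum_subtractf sum_distrib_left S1_def S2_def)
  also have "\<dots> = S2 - S1\<^sup>2 / real n"
    using n0 by (simp add: field_simps power2_eq_square)
  finally have V: "(\<Sum>i<n. (rh i - S1 / real n)\<^sup>2) = S2 - S1\<^sup>2 / real n" .
  have "Z_est rs rp rm q n os xs = (S2 - S1\<^sup>2 / real n) / (real n - 1) - S1 / real n * rm q * (1 - rm q) / d
        - (1 - S1 / real n) * rp q * (1 - rp q) / d"
  proof -
    have V': "(\<Sum>i<n. (rh i - (\<Sum>i<n. rh i) / real n)\<^sup>2) = S2 - (\<Sum>i<n. rh i)\<^sup>2 / real n"
      using V by (simp add: S1_def)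
    show ?thesis
      unfolding Z_est_def Let_def rh_def[symmetric] V' by (simp add: S1_def d_def)
  qed
  also have "\<dots> = S2 / (real n - 1) - S1\<^sup>2 / (real n * (real n - 1)) - S1 * (rm q * (1 - rm q) / d - rp q * (1 - rp q) / d) / real n
     - rp q * (1 - rp q) / d"
    using alg1[OF n0] by blast
  finally show ?thesis by (simp add: rh_def S1_def S2_def d_def)
qed
lemma alg2:
  fixes N m2 p c b :: real
  assumes "N \<noteq> 0" "N - 1 \<noteq> 0"
  shows "N * m2 / (N - 1) - N * (m2 + (N - 1) * p\<^sup>2) / (N * (N - 1)) - N * p * c / N - b = m2 - p\<^sup>2 - p * c - b"
proof -
  have "N * m2 / (N - 1) - N * (m2 + (N - 1) * p\<^sup>2) / (N * (N - 1)) = (N * m2 - (m2 + (N - 1) * p\<^sup>2)) / (N - 1)"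
    using assms by (simp add: diff_divide_distrib)
  also have "N * m2 - (m2 + (N - 1) * p\<^sup>2) = (N - 1) * (m2 - p\<^sup>2)" by (simp add: algebra_simps)
  also have "\<dots> / (N - 1) = m2 - p\<^sup>2" using assms by simp
  finally show ?thesis using assms by simp
qed

lemma alg3:
  fixes N S1 S2 c b :: real
  assumes "N \<noteq> 0" "N - 1 \<noteq> 0"
  shows "S2 / N * (N / (N - 1)) - (S1 / N)\<^sup>2 * (N / (N - 1)) - S1 / N * c - b
       = S2 / (N - 1) - S1\<^sup>2 / (N * (N - 1)) - S1 * c / N - b"
  using assms by (simp add: power2_eq_square)
theorem proposition4:
  fixes M :: "'w measure"
    and rs :: "'q \<Rightarrow> 'o::countable \<Rightarrow> real"
    and rp rm :: "'q \<Rightarrow> real"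
    and \<pi> :: "'q \<Rightarrow> 'o pmf"
    and q :: 'q
    and Os :: "nat \<Rightarrow> 'w \<Rightarrow> 'o"
    and \<Xi> :: "nat \<Rightarrow> 'w \<Rightarrow> real"
  assumes binary: "\<And>q' x. rs q' x \<in> {0, 1}"
    and rp_range: "\<And>q'. rp q' \<in> {0..1}"
    and rm_range: "\<And>q'. rm q' \<in> {0..1}"
    and denom: "1 - rp q - rm q \<noteq> 0"
    and M: "prob_space M"
    and indep: "prob_space.indep_vars M (\<lambda>_. count_space UNIV \<Otimes>\<^sub>M borel)
                  (\<lambda>i \<omega>. (Os i \<omega>, \<Xi> i \<omega>)) UNIV"
    and distr: "\<And>i. distr M (count_space UNIV \<Otimes>\<^sub>M borel) (\<lambda>\<omega>. (Os i \<omega>, \<Xi> i \<omega>))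
                  = measure_pmf (\<pi> q) \<Otimes>\<^sub>M uniform_measure lborel {0..1}"
  shows "(\<forall>n\<ge>2.
           prob_space.expectation M (\<lambda>\<omega>. Z_est rs rp rm q n (\<lambda>i. Os i \<omega>) (\<lambda>i. \<Xi> i \<omega>))
             = p_pol rs \<pi> q * (1 - p_pol rs \<pi> q)
         \<and> p_pol rs \<pi> q * (1 - p_pol rs \<pi> q) = measure_pmf.variance (\<pi> q) (rs q))
         \<and> (AE \<omega> in M. (\<lambda>n. Z_est rs rp rm q n (\<lambda>i. Os i \<omega>) (\<lambda>i. \<Xi> i \<omega>))
           \<longlonglongrightarrow> p_pol rs \<pi> q * (1 - p_pol rs \<pi> q))"
proof -
  interpret prob_space M by (rule M)
  define d where "d = 1 - rp q - rm q"
  define cA where "cA = rm q * (1 - rm q) / (1 - rp q - rm q)\<^sup>2"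
  define cB where "cB = rp q * (1 - rp q) / (1 - rp q - rm q)\<^sup>2"
  define p where "p = p_pol rs \<pi> q"
  define m2 where "m2 = cB + p * (cA + 1 - cB)"
  define N where "N = count_space (UNIV::'o set) \<Otimes>\<^sub>M (borel :: real measure)"
  define P where "P = measure_pmf (\<pi> q) \<Otimes>\<^sub>M uniform_measure lborel {0..1::real}"
  define g where "g z = corrected_reward rs rp rm q (fst z) (snd z)" for z
  define Y where "Y = (\<lambda>i \<omega>. g (Os i \<omega>, \<Xi> i \<omega>))"
  define K where "K = 1 / \<bar>d\<bar>"
  have Kpos: "K > 0" using denom by (simp add: K_def d_def)
  have gm: "g \<in> borel_measurable N"
    unfolding g_def N_def by (rule corrected_meas)
  have g2m: "(\<lambda>z. (g z)\<^sup>2) \<in> borel_measurable N"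
    using gm by measurable
  have Wm: "(\<lambda>\<omega>. (Os i \<omega>, \<Xi> i \<omega>)) \<in> measurable M N" for i
    using indep unfolding indep_vars_def N_def by auto
  have Ym[measurable]: "Y i \<in> borel_measurable M" for i
    unfolding Y_def using measurable_compose[OF Wm gm] by simp
  have gb: "\<bar>g z\<bar> \<le> K" for z
    unfolding g_def K_def d_def by (rule corrected_bound[OF binary rp_range rm_range])
  have Yb: "\<bar>Y i \<omega>\<bar> \<le> K" for i \<omega>
    by (simp add: Y_def gb)
  have dist: "distr M N (\<lambda>\<omega>. (Os i \<omega>, \<Xi> i \<omega>)) = P" for i
    using distr[of i] by (simp add: N_def P_def)
  have EP: "(\<integral>\<omega>. f (Os i \<omega>, \<Xi> i \<omega>) \<partial>M) = (\<integral>z. f z \<partial>P)" if f: "f \<in> borel_measurable N" for f :: "_ \<Rightarrow> real" and i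
    using integral_distr[OF Wm f, of i] dist[of i] by simp
  have EY: "expectation (Y i) = p" for i
    using EP[OF gm, of i] corrected_outer(3)[of rs rp rm q \<pi>, OF binary rp_range rm_range denom]
    by (simp add: Y_def g_def P_def p_def)
  have EY2: "expectation (\<lambda>\<omega>. (Y i \<omega>)\<^sup>2) = m2" for i
    using EP[OF g2m, of i] corrected_outer(4)[of rs rp rm q \<pi>, OF binary rp_range rm_range denom]
    by (simp add: Y_def g_def P_def p_def m2_def cA_def cB_def)
  have indY: "indep_vars (\<lambda>_. borel) Y UNIV"
    unfolding Y_def using indep_vars_compose2[OF indep, of "\<lambda>_. g" "\<lambda>_. borel"] gm
    by (simp add: N_def)
  have indY2: "indep_vars (\<lambda>_. borel) (\<lambda>i \<omega>. (Y i \<omega>)\<^sup>2) UNIV"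
    unfolding Y_def using indep_vars_compose2[OF indep, of "\<lambda>_ z. (g z)\<^sup>2" "\<lambda>_. borel"] g2m
    by (simp add: N_def)
  have distY: "distr M borel (Y i) = distr P borel g" for i
  proof -
    have "distr M borel (Y i) = distr M borel (g \<circ> (\<lambda>\<omega>. (Os i \<omega>, \<Xi> i \<omega>)))"
      by (simp add: Y_def comp_def)
    also have "\<dots> = distr (distr M N (\<lambda>\<omega>. (Os i \<omega>, \<Xi> i \<omega>))) borel g"
      by (rule distr_distr[OF gm Wm, symmetric])
    finally show ?thesis by (simp add: dist)
  qed
  have distY2: "distr M borel (\<lambda>\<omega>. (Y i \<omega>)\<^sup>2) = distr P borel (\<lambda>z. (g z)\<^sup>2)" for i
  proof -
    have "distr M borel (\<lambda>\<omega>. (Y i \<omega>)\<^sup>2) = distr M borel ((\<lambda>z. (g z)\<^sup>2) \<circ> (\<lambda>\<omega>. (Os i \<omega>, \<Xi> i \<omega>)))"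
      by (simp add: Y_def comp_def)
    also have "\<dots> = distr (distr M N (\<lambda>\<omega>. (Os i \<omega>, \<Xi> i \<omega>))) borel (\<lambda>z. (g z)\<^sup>2)"
      by (rule distr_distr[OF g2m Wm, symmetric])
    finally show ?thesis by (simp add: dist)
  qed
  have intYY: "integrable M (\<lambda>\<omega>. Y i \<omega> * Y j \<omega>)" for i j
  proof (rule integrable_const_bound[where B="K * K"])
    show "AE x in M. norm (Y i x * Y j x) \<le> K * K"
      by (intro AE_I2) (simp add: abs_mult mult_mono[OF Yb Yb _ abs_ge_zero] Kpos less_imp_le)
  qed simp
  have intY: "integrable M (Y i)" for i
    by (rule integrable_const_bound[where B=K]) (simp_all add: Yb)
  have EYY: "expectation (\<lambda>\<omega>. Y i \<omega> * Y j \<omega>) = (if i = j then m2 else p\<^sup>2)" for i j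
  proof (cases "i = j")
    case True
    then show ?thesis using EY2[of i] by (simp add: power2_eq_square)
  next
    case False
    have "expectation (\<lambda>\<omega>. \<Prod>k\<in>{i,j}. Y k \<omega>) = (\<Prod>k\<in>{i,j}. expectation (Y k))"
      by (rule indep_vars_lebesgue_integral) (auto intro: intY indep_vars_subset[OF indY])
    then show ?thesis using False by (simp add: EY power2_eq_square)
  qed
  have Zeq: "Z_est rs rp rm q n (\<lambda>i. Os i \<omega>) (\<lambda>i. \<Xi> i \<omega>) =
     (\<Sum>i<n. (Y i \<omega>)\<^sup>2) / (real n - 1) - (\<Sum>i<n. Y i \<omega>)\<^sup>2 / (real n * (real n - 1))
     - (\<Sum>i<n. Y i \<omega>) * (cA - cB) / real n - cB" if n: "n \<ge> 2" for n \<omega>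
    using Z_alg[OF n, of rs rp rm q "\<lambda>i. Os i \<omega>" "\<lambda>i. \<Xi> i \<omega>"]
    by (simp add: Y_def g_def cA_def cB_def)
  have part1: "expectation (\<lambda>\<omega>. Z_est rs rp rm q n (\<lambda>i. Os i \<omega>) (\<lambda>i. \<Xi> i \<omega>)) = p * (1 - p)"
    if n: "n \<ge> 2" for n
  proof -
    have n0: "real n \<noteq> 0" "real n - 1 \<noteq> 0" using n by auto
    have sq: "(\<Sum>i<n. Y i \<omega>)\<^sup>2 = (\<Sum>i<n. \<Sum>j<n. Y i \<omega> * Y j \<omega>)" for \<omega>
      by (simp add: power2_eq_square sum_product)
    have i1: "integrable M (\<lambda>\<omega>. \<Sum>i<n. Y i \<omega>)"
      by (rule Bochner_Integration.integrable_sum) (rule intY)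
    have i2: "integrable M (\<lambda>\<omega>. \<Sum>i<n. (Y i \<omega>)\<^sup>2)"
      by (rule Bochner_Integration.integrable_sum) (simp add: power2_eq_square intYY)
    have i3: "integrable M (\<lambda>\<omega>. \<Sum>i<n. \<Sum>j<n. Y i \<omega> * Y j \<omega>)"
      by (rule Bochner_Integration.integrable_sum, rule Bochner_Integration.integrable_sum) (rule intYY)
    have E1: "expectation (\<lambda>\<omega>. \<Sum>i<n. Y i \<omega>) = real n * p"
      by (simp add: Bochner_Integration.integral_sum intY EY)
    have E2: "expectation (\<lambda>\<omega>. \<Sum>i<n. (Y i \<omega>)\<^sup>2) = real n * m2"
      by (subst Bochner_Integration.integral_sum) (simp_all add: power2_eq_square intYY EY2[unfolded power2_eq_square])
    have inner: "(\<Sum>j<n. (if i = j then m2 else p\<^sup>2)) = m2 + (real n - 1) * p\<^sup>2" if i: "i < n" for i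
    proof -
      have "(\<Sum>j<n. (if i = j then m2 else p\<^sup>2)) = (\<Sum>j<n. p\<^sup>2 + (if i = j then m2 - p\<^sup>2 else 0))"
        by (intro sum.cong) auto
      also have "\<dots> = real n * p\<^sup>2 + (m2 - p\<^sup>2)"
        using i by (simp add: sum.distrib)
      finally show ?thesis by (simp add: algebra_simps)
    qed
    have E3: "expectation (\<lambda>\<omega>. \<Sum>i<n. \<Sum>j<n. Y i \<omega> * Y j \<omega>) = real n * (m2 + (real n - 1) * p\<^sup>2)"
    proof -
      have "expectation (\<lambda>\<omega>. \<Sum>i<n. \<Sum>j<n. Y i \<omega> * Y j \<omega>) = (\<Sum>i<n. \<Sum>j<n. expectation (\<lambda>\<omega>. Y i \<omega> * Y j \<omega>))"
        by (simp add: Bochner_Integration.integral_sum intYY Bochner_Integration.integrable_sum)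
      also have "\<dots> = (\<Sum>i<n. m2 + (real n - 1) * p\<^sup>2)"
        by (intro sum.cong refl) (simp add: EYY inner)
      finally show ?thesis by simp
    qed
    have "expectation (\<lambda>\<omega>. Z_est rs rp rm q n (\<lambda>i. Os i \<omega>) (\<lambda>i. \<Xi> i \<omega>)) =
      expectation (\<lambda>\<omega>. (\<Sum>i<n. (Y i \<omega>)\<^sup>2) / (real n - 1) - (\<Sum>i<n. \<Sum>j<n. Y i \<omega> * Y j \<omega>) / (real n * (real n - 1))
     - (\<Sum>i<n. Y i \<omega>) * (cA - cB) / real n - cB)"
      by (simp add: Zeq[OF n] sq)
    also have "\<dots> = real n * m2 / (real n - 1) - real n * (m2 + (real n - 1) * p\<^sup>2) / (real n * (real n - 1))
        - real n * p * (cA - cB) / real n - cB"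
      using i1 i2 i3 by (simp add: E1 E2 E3 prob_space)
    also have "\<dots> = m2 - p\<^sup>2 - p * (cA - cB) - cB"
      by (rule alg2[OF n0])
    also have "\<dots> = p * (1 - p)"
      by (simp add: m2_def algebra_simps power2_eq_square)
    finally show ?thesis .
  qed
  have part2: "p * (1 - p) = measure_pmf.variance (\<pi> q) (rs q)"
  proof -
    have rsi: "integrable (measure_pmf (\<pi> q)) (rs q)"
    proof (rule measure_pmf.integrable_const_bound[where B=1])
      show "AE x in measure_pmf (\<pi> q). norm (rs q x) \<le> 1"
      proof (intro AE_I2)
        fix x have "rs q x \<in> {0, 1}" by (rule binary)
        then show "norm (rs q x) \<le> 1" by auto
      qed
    qed simp
    have sqr: "(rs q x)\<^sup>2 = rs q x" for x
      using binary[of q x] by auto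
    have "measure_pmf.variance (\<pi> q) (rs q) = measure_pmf.expectation (\<pi> q) (\<lambda>x. (rs q x)\<^sup>2) - (measure_pmf.expectation (\<pi> q) (rs q))\<^sup>2"
      by (rule measure_pmf.variance_eq) (simp_all add: sqr rsi)
    also have "\<dots> = p - p\<^sup>2"
      by (simp add: sqr p_def p_pol_def)
    finally show ?thesis by (simp add: algebra_simps power2_eq_square)
  qed
  have L1: "AE \<omega> in M. (\<lambda>n. (\<Sum>i<n. Y i \<omega>) / real n) \<longlonglongrightarrow> p"
    using slln_bounded[OF M indY _ Yb Kpos] distY EY by simp
  have Y2b: "\<bar>(Y i \<omega>)\<^sup>2\<bar> \<le> K\<^sup>2" for i \<omega>
    using power_mono[OF Yb[of i \<omega>] abs_ge_zero, of 2] by simp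
  have K2pos: "K\<^sup>2 > 0" using Kpos by simp
  have L2: "AE \<omega> in M. (\<lambda>n. (\<Sum>i<n. (Y i \<omega>)\<^sup>2) / real n) \<longlonglongrightarrow> m2"
    using slln_bounded[OF M indY2 _ Y2b K2pos] distY2 EY2 by simp
  have part3: "AE \<omega> in M. (\<lambda>n. Z_est rs rp rm q n (\<lambda>i. Os i \<omega>) (\<lambda>i. \<Xi> i \<omega>)) \<longlonglongrightarrow> p * (1 - p)"
    using L1 L2
  proof eventually_elim
    case (elim \<omega>)
    have nn: "(\<lambda>n. real n / (real n - 1)) \<longlonglongrightarrow> 1" by real_asymp
    have lim: "(\<lambda>n. (\<Sum>i<n. (Y i \<omega>)\<^sup>2) / real n * (real n / (real n - 1))
        - ((\<Sum>i<n. Y i \<omega>) / real n)\<^sup>2 * (real n / (real n - 1))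
        - (\<Sum>i<n. Y i \<omega>) / real n * (cA - cB) - cB) \<longlonglongrightarrow> m2 * 1 - p\<^sup>2 * 1 - p * (cA - cB) - cB"
      by (intro tendsto_intros elim nn)
    have eq: "m2 * 1 - p\<^sup>2 * 1 - p * (cA - cB) - cB = p * (1 - p)"
      by (simp add: m2_def algebra_simps power2_eq_square)
    show ?case
    proof (rule Lim_transform_eventually[OF lim[unfolded eq]])
      show "\<forall>\<^sub>F n in sequentially. (\<Sum>i<n. (Y i \<omega>)\<^sup>2) / real n * (real n / (real n - 1))
        - ((\<Sum>i<n. Y i \<omega>) / real n)\<^sup>2 * (real n / (real n - 1))
        - (\<Sum>i<n. Y i \<omega>) / real n * (cA - cB) - cB = Z_est rs rp rm q n (\<lambda>i. Os i \<omega>) (\<lambda>i. \<Xi> i \<omega>)"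
        using eventually_ge_at_top[of "2::nat"]
      proof eventually_elim
        case (elim n)
        then have n0: "real n \<noteq> 0" "real n - 1 \<noteq> 0" by auto
        show ?case unfolding Zeq[OF elim] by (rule alg3[OF n0])
      qed
    qed
  qed
  show ?thesis
    using part1 part2 part3 by (simp add: p_def)
qed

end
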